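(* Let $1\le r\le n$ and let $P_1,\dots,P_n$ be PRDS p-values satisfying the strong alternatives assumption: for every $\alpha>0$ and every $i$, $\sup_{\theta_i\in\Theta_{1i}}\Pr_{\theta_i}(P_i\le\alpha)=1$. Let $f(P_1,\dots,P_n)$ be a valid monotone p-value for $H_0^{r/n}$, and for $u\subset\{1,\dots,n\}$ with $|u|=n-r+1$ define $$g_u(\boldsymbol p_u)=\inf_{\boldsymbol p_{-u}\in(0,1]^{r-1}} f(p_1,\dots,p_n).$$ Then $g_u$ is a valid monotone meta-analysis p-value for $H_{0u}$.
   Context: Component hypotheses $H_{0i}:\theta_i\in\Theta_{0i}$ vs $H_{1i}:\theta_i\in\Theta_{1i}$ ($\Theta_i=\Theta_{0i}\cup\Theta_{1i}$ disjoint), $i=1,\dots,n$; $P_i$ has distribution $\Pr_{\theta_i}$ and each $P_i$ is valid: $\sup_{\theta_i\in\Theta_{0i}}\Pr_{\theta_i}(P_i\le\alpha)\le\alpha$ for all $\alpha\in[0,1]$. The joint law of $\boldsymbol P$ is $\Pr_\theta$, $\theta\in\prod_i\Theta_i$. PRDS means positively regression dependent in the sense of Benjamini and Yekutieli (2001) under every $\theta$; in particular $\Pr_\theta(P_1\le p_1,\dots,P_n\le p_n)\ge\prod_i\Pr_{\theta_i}(P_i\le p_i)$ for all $\boldsymbol p\in[0,1]^n$ and all $\theta$. For $u\subset\{1,\dots,n\}$, $-u$ is its complement, $\boldsymbol p_u=(p_j)_{j\in u}$, $H_{0u}$: $\theta_j\in\Theta_{0j}$ for all $j\in u$ (null space $\Theta_{0u}$).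 $H_0^{r/n}$: at most $r-1$ of the $H_{0i}$ are false, null space $\Theta_0^{r/n}$. A combined p-value $f$ is valid for $H_0^{r/n}$ if $\sup_{\theta\in\Theta_0^{r/n}}\Pr_\theta(f(\boldsymbol P)\le\alpha)\le\alpha$ for all $\alpha\in[0,1]$, and monotone if $f$ is non-decreasing in each argument; a meta-analysis p-value $g_u$ is valid for $H_{0u}$ if $\sup_{\theta_u\in\Theta_{0u}}\Pr_{\theta_u}(g_u(\boldsymbol P_u)\le\alpha)\le\alpha$ for all $\alpha$. *)

theory Defs
  imports "HOL-Probability.Probability"
begin

definition increasing_set :: "nat set \<Rightarrow> (nat \<Rightarrow> real) set \<Rightarrow> bool" where
  "increasing_set I D \<longleftrightarrow> D \<subseteq> PiE I (\<lambda>_. UNIV) \<and>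
     (\<forall>x\<in>D. \<forall>y\<in>PiE I (\<lambda>_. UNIV). (\<forall>i\<in>I. x i \<le> y i) \<longrightarrow> y \<in> D)"

text \<open>PRDS in the sense of Benjamini and Yekutieli (2001), on the index set I0 \<subseteq> I:
  for every increasing (measurable) set D and every i in I0, the conditional probability
  Pr(X \<in> D | X_i = x) admits a version h(x) that is non-decreasing in x.\<close>

definition PRDS :: "'w measure \<Rightarrow> nat set \<Rightarrow> nat set \<Rightarrow> (nat \<Rightarrow> 'w \<Rightarrow> real) \<Rightarrow> bool" where
  "PRDS M I I0 X \<longleftrightarrow>
     (\<forall>D. D \<in> sets (PiM I (\<lambda>_. borel)) \<and> increasing_set I D \<longrightarrow>
       (\<forall>i\<in>I0. \<exists>h :: real \<Rightarrow> real. mono h \<and> h \<in> borel_measurable borel \<and>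
          (\<forall>x. h x \<in> {0..1}) \<and>
          (\<forall>B\<in>sets borel.
             measure M {\<omega>\<in>space M. (\<lambda>j\<in>I. X j \<omega>) \<in> D \<and> X i \<omega> \<in> B}
             = (\<integral>\<omega>. indicator B (X i \<omega>) * h (X i \<omega>) \<partial>M))))"

definition monotone_pval :: "nat set \<Rightarrow> ((nat \<Rightarrow> real) \<Rightarrow> real) \<Rightarrow> bool" where
  "monotone_pval I F \<longleftrightarrow>
     (\<forall>x\<in>PiE I (\<lambda>_. {0..1}). \<forall>y\<in>PiE I (\<lambda>_. {0..1}). (\<forall>i\<in>I. x i \<le> y i) \<longrightarrow> F x \<le> F y)"

definition meta_g :: "nat set \<Rightarrow> nat set \<Rightarrow> ((nat \<Rightarrow> real) \<Rightarrow> real) \<Rightarrow> (nat \<Rightarrow> real) \<Rightarrow> real" where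
  "meta_g I u f p = Inf {f (\<lambda>i\<in>I. if i \<in> u then p i else q i) | q. \<forall>j\<in>I - u. q j \<in> {0<..1}}"

end

theory Submission imports Defs begin

lemma combined_in:
  assumes "\<forall>i\<in>u. p i \<in> {0..1}" "\<forall>j\<in>I - u. q j \<in> {0..1}"
  shows "(\<lambda>i\<in>I. if i \<in> u then p i else q i) \<in> PiE I (\<lambda>_. {0..1::real})"
  using assms by (auto simp: PiE_iff)

lemma monoD':
  assumes "monotone_pval I f" "x \<in> PiE I (\<lambda>_. {0..1})" "y \<in> PiE I (\<lambda>_. {0..1})" "\<forall>i\<in>I. x i \<le> y i"
  shows "f x \<le> f y"
  using assms unfolding monotone_pval_def by blast

lemma meta_g_INF:
  assumes fin: "finite I" and uI: "u \<subseteq> I" and mono: "monotone_pval I f"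
    and rng: "\<forall>x\<in>PiE I (\<lambda>_. {0..1}). f x \<in> {0..1}" and p: "\<forall>i\<in>u. p i \<in> {0..1}"
  shows "meta_g I u f p = (INF k. f (\<lambda>i\<in>I. if i\<in>u then p i else 1 / real (Suc k)))"
proof -
  define S where "S = {f (\<lambda>i\<in>I. if i \<in> u then p i else q i) | q. \<forall>j\<in>I - u. q j \<in> {0<..1}}"
  define H where "H k = f (\<lambda>i\<in>I. if i\<in>u then p i else 1 / real (Suc k))" for k
  have Sb: "bdd_below S"
  proof -
    have "0 \<le> s" if "s \<in> S" for s
    proof -
      obtain q where q: "\<forall>j\<in>I - u. q j \<in> {0<..1}" and s: "s = f (\<lambda>i\<in>I. if i \<in> u then p i else q i)"
        using \<open>s \<in> S\<close> unfolding S_def by auto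
      have "(\<lambda>i\<in>I. if i \<in> u then p i else q i) \<in> PiE I (\<lambda>_. {0..1::real})"
        by (rule combined_in) (use p q in \<open>auto simp: less_imp_le\<close>)+
      with rng s show ?thesis by auto
    qed
    then show ?thesis by (auto simp: bdd_below_def)
  qed
  have HS: "H k \<in> S" for k
    unfolding S_def H_def by (rule CollectI, rule exI[of _ "\<lambda>_. 1 / real (Suc k)"]) auto
  have Hb: "bdd_below (range H)"
    unfolding bdd_below_def H_def
    by (rule exI[of _ 0]) (use rng p in \<open>auto intro!: combined_in simp del: restrict_apply\<close>)
  have "Inf S \<le> (INF k. H k)"
    by (rule cINF_greatest) (auto intro: cInf_lower[OF HS Sb])
  moreover have "(INF k. H k) \<le> Inf S"
  proof (rule cInf_greatest)
    show "S \<noteq> {}" using HS by auto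
  next
    fix s assume "s \<in> S"
    then obtain q where q: "\<forall>j\<in>I - u. q j \<in> {0<..1}" and s: "s = f (\<lambda>i\<in>I. if i \<in> u then p i else q i)"
      unfolding S_def by auto
    define e where "e = Min (insert 1 (q ` (I - u)))"
    have e0: "e > 0" unfolding e_def using fin q by (subst Min_gr_iff) auto
    have eq: "\<forall>j\<in>I - u. e \<le> q j" unfolding e_def using fin by auto
    obtain k where k: "inverse (real (Suc k)) < e" using reals_Archimedean[OF e0] by auto
    have "H k \<le> s"
      unfolding H_def s
    proof (rule monoD'[OF mono])
      show "(\<lambda>i\<in>I. if i\<in>u then p i else 1 / real (Suc k)) \<in> PiE I (\<lambda>_. {0..1})"
        by (rule combined_in) (use p in auto)
      show "(\<lambda>i\<in>I. if i\<in>u then p i else q i) \<in> PiE I (\<lambda>_. {0..1})"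
        by (rule combined_in) (use p q in \<open>auto simp: less_imp_le\<close>)+
      show "\<forall>i\<in>I. (\<lambda>i\<in>I. if i\<in>u then p i else 1 / real (Suc k)) i \<le> (\<lambda>i\<in>I. if i\<in>u then p i else q i) i"
      proof
        fix i assume i: "i \<in> I"
        show "(\<lambda>i\<in>I. if i\<in>u then p i else 1 / real (Suc k)) i \<le> (\<lambda>i\<in>I. if i\<in>u then p i else q i) i"
        proof (cases "i \<in> u")
          case False
          then have "e \<le> q i" using eq i by blast
          then show ?thesis using k i False by (simp add: inverse_eq_divide)
        qed (use i in simp)
      qed
    qed
    then show "(INF k. H k) \<le> s" using cINF_lower2[OF Hb, of k s] by simp
  qed
  ultimately show ?thesis unfolding meta_g_def S_def[symmetric] H_def by simp
qed


lemma transfer_measure: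
  assumes eq: "distr M1 (PiM v (\<lambda>_. borel)) (\<lambda>\<omega>. \<lambda>j\<in>v. P j \<omega>) = distr M2 (PiM v (\<lambda>_. borel)) (\<lambda>\<omega>. \<lambda>j\<in>v. P j \<omega>)"
    and m1: "\<forall>j\<in>v. (P j :: _ \<Rightarrow> real) \<in> borel_measurable M1"
    and m2: "\<forall>j\<in>v. P j \<in> borel_measurable M2"
    and A: "A \<in> sets (PiM v (\<lambda>_. borel))"
  shows "measure M1 {\<omega>\<in>space M1. (\<lambda>j\<in>v. P j \<omega>) \<in> A} = measure M2 {\<omega>\<in>space M2. (\<lambda>j\<in>v. P j \<omega>) \<in> A}"
proof -
  have f1: "(\<lambda>\<omega>. \<lambda>j\<in>v. P j \<omega>) \<in> measurable M1 (PiM v (\<lambda>_. borel))"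
    by (rule measurable_restrict) (use m1 in auto)
  have f2: "(\<lambda>\<omega>. \<lambda>j\<in>v. P j \<omega>) \<in> measurable M2 (PiM v (\<lambda>_. borel))"
    by (rule measurable_restrict) (use m2 in auto)
  have "measure M1 {\<omega>\<in>space M1. (\<lambda>j\<in>v. P j \<omega>) \<in> A} = measure (distr M1 (PiM v (\<lambda>_. borel)) (\<lambda>\<omega>. \<lambda>j\<in>v. P j \<omega>)) A"
    by (subst measure_distr[OF f1 A]) (auto intro!: arg_cong[where f="measure M1"])
  also have "\<dots> = measure (distr M2 (PiM v (\<lambda>_. borel)) (\<lambda>\<omega>. \<lambda>j\<in>v. P j \<omega>)) A" using eq by simp
  also have "\<dots> = measure M2 {\<omega>\<in>space M2. (\<lambda>j\<in>v. P j \<omega>) \<in> A}"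
    by (subst measure_distr[OF f2 A]) (auto intro!: arg_cong[where f="measure M2"])
  finally show ?thesis .
qed

lemma H_meas:
  assumes f_meas: "f \<in> borel_measurable (PiM I (\<lambda>_. borel))"
  shows "(\<lambda>x. f (\<lambda>i\<in>I. if i\<in>u then x i else (c::real))) \<in> borel_measurable (PiM u (\<lambda>_. borel))"
proof (rule measurable_compose[OF _ f_meas])
  show "(\<lambda>x. \<lambda>i\<in>I. if i\<in>u then x i else c) \<in> measurable (PiM u (\<lambda>_. borel)) (PiM I (\<lambda>_. borel))"
  proof (rule measurable_restrict)
    fix i assume "i \<in> I"
    show "(\<lambda>x. if i\<in>u then x i else c) \<in> borel_measurable (PiM u (\<lambda>_. borel))"
      by (cases "i \<in> u") auto
  qed
qed

theorem lemma1:
  fixes n r :: nat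
    and \<Theta>0 \<Theta>1 :: "nat \<Rightarrow> 'a set"
    and M :: "(nat \<Rightarrow> 'a) \<Rightarrow> 'w measure"
    and P :: "nat \<Rightarrow> 'w \<Rightarrow> real"
    and f :: "(nat \<Rightarrow> real) \<Rightarrow> real"
    and u :: "nat set"
  defines "\<Theta> \<equiv> PiE {1..n} (\<lambda>i. \<Theta>0 i \<union> \<Theta>1 i)"
  assumes r: "1 \<le> r" "r \<le> n"
    and disj: "\<forall>i\<in>{1..n}. \<Theta>0 i \<inter> \<Theta>1 i = {}"
    and prob: "\<forall>\<theta>\<in>\<Theta>. prob_space (M \<theta>)"
    and P_meas: "\<forall>\<theta>\<in>\<Theta>. \<forall>i\<in>{1..n}. P i \<in> borel_measurable (M \<theta>)"
    and P_range: "\<forall>\<theta>\<in>\<Theta>. \<forall>i\<in>{1..n}. \<forall>\<omega>\<in>space (M \<theta>). P i \<omega> \<in> {0..1}"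
    and marginal: "\<forall>v. v \<subseteq> {1..n} \<longrightarrow> (\<forall>\<theta>\<in>\<Theta>. \<forall>\<theta>'\<in>\<Theta>. (\<forall>j\<in>v. \<theta> j = \<theta>' j) \<longrightarrow>
        distr (M \<theta>) (PiM v (\<lambda>_. borel)) (\<lambda>\<omega>. \<lambda>j\<in>v. P j \<omega>)
      = distr (M \<theta>') (PiM v (\<lambda>_. borel)) (\<lambda>\<omega>. \<lambda>j\<in>v. P j \<omega>))"
    and P_valid: "\<forall>i\<in>{1..n}. \<forall>\<theta>\<in>\<Theta>. \<theta> i \<in> \<Theta>0 i \<longrightarrow>
        (\<forall>\<alpha>\<in>{0..1}. measure (M \<theta>) {\<omega>\<in>space (M \<theta>). P i \<omega> \<le> \<alpha>} \<le> \<alpha>)"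
    and prds: "\<forall>\<theta>\<in>\<Theta>. PRDS (M \<theta>) {1..n} {1..n} P"
    and strong_alt: "\<forall>\<alpha>>0. \<forall>i\<in>{1..n}. \<forall>\<epsilon>>0. \<exists>\<theta>\<in>\<Theta>. \<theta> i \<in> \<Theta>1 i \<and>
        measure (M \<theta>) {\<omega>\<in>space (M \<theta>). P i \<omega> \<le> \<alpha>} > 1 - \<epsilon>"
    and f_meas: "f \<in> borel_measurable (PiM {1..n} (\<lambda>_. borel))"
    and f_range: "\<forall>x\<in>PiE {1..n} (\<lambda>_. {0..1}). f x \<in> {0..1}"
    and f_mono: "monotone_pval {1..n} f"
    and f_valid: "\<forall>\<theta>\<in>\<Theta>. card {i\<in>{1..n}. \<theta> i \<in> \<Theta>1 i} \<le> r - 1 \<longrightarrow>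
        (\<forall>\<alpha>\<in>{0..1}. measure (M \<theta>) {\<omega>\<in>space (M \<theta>). f (\<lambda>i\<in>{1..n}. P i \<omega>) \<le> \<alpha>} \<le> \<alpha>)"
    and u: "u \<subseteq> {1..n}" "card u = n - r + 1"
  shows "monotone_pval u (meta_g {1..n} u f) \<and>
    (\<forall>\<theta>\<in>\<Theta>. (\<forall>j\<in>u. \<theta> j \<in> \<Theta>0 j) \<longrightarrow>
       (\<lambda>\<omega>. meta_g {1..n} u f (\<lambda>j\<in>u. P j \<omega>)) \<in> borel_measurable (M \<theta>) \<and>
       (\<forall>\<alpha>\<in>{0..1}. measure (M \<theta>) {\<omega>\<in>space (M \<theta>). meta_g {1..n} u f (\<lambda>j\<in>u. P j \<omega>) \<le> \<alpha>} \<le> \<alpha>))"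
  proof -
  have finI: "finite {1..n}" by simp
  have uI: "u \<subseteq> {1..n}" and cu: "card u = n - r + 1" using u by auto
  have finu: "finite u" using uI finite_subset by blast
  have cdiff: "card ({1..n} - u) = r - 1"
    using card_Diff_subset[OF finu uI] cu r by simp
  define H where "H k x = f (\<lambda>i\<in>{1..n}. if i\<in>u then x i else 1 / real (Suc k))" for k x
  have HM[measurable]: "H k \<in> borel_measurable (PiM u (\<lambda>_. borel))" for k
    unfolding H_def by (rule H_meas[OF f_meas])
  have Hrng: "H k x \<in> {0..1}" if "\<forall>i\<in>u. x i \<in> {0..1}" for k x
    unfolding H_def using f_range combined_in[of u x "{1..n}" "\<lambda>_. 1 / real (Suc k)"] that by auto
  have Hmono: "H k x \<le> H k y" if "\<forall>i\<in>u. x i \<in> {0..1}" "\<forall>i\<in>u. y i \<in> {0..1}" "\<forall>i\<in>u. x i \<le> y i" for k x y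
    unfolding H_def
    by (rule monoD'[OF f_mono]) (use that in \<open>auto intro!: combined_in\<close>)
  have Hanti: "H (Suc k) x \<le> H k x" if "\<forall>i\<in>u. x i \<in> {0..1}" for k x
    unfolding H_def
    by (rule monoD'[OF f_mono]) (use that in \<open>auto intro!: combined_in simp: divide_simps\<close>)
  have gH: "meta_g {1..n} u f x = (INF k. H k x)" if "\<forall>i\<in>u. x i \<in> {0..1}" for x
    unfolding H_def by (rule meta_g_INF[OF finI uI f_mono f_range that])
  have part1: "monotone_pval u (meta_g {1..n} u f)"
    unfolding monotone_pval_def
  proof (intro ballI impI)
    fix x y :: "nat \<Rightarrow> real" assume x: "x \<in> PiE u (\<lambda>_. {0..1})" and y: "y \<in> PiE u (\<lambda>_. {0..1})" and xy: "\<forall>i\<in>u. x i \<le> y i"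
    have x': "\<forall>i\<in>u. x i \<in> {0..1}" and y': "\<forall>i\<in>u. y i \<in> {0..1}" using x y by (auto simp: PiE_iff)
    have bdd: "bdd_below (range (\<lambda>k. H k x))"
      unfolding bdd_below_def using Hrng[OF x'] by auto
    have "(INF k. H k x) \<le> (INF k. H k y)"
      by (rule cINF_mono[OF _ bdd]) (use Hmono[OF x' y' xy] in auto)
    then show "meta_g {1..n} u f x \<le> meta_g {1..n} u f y" using gH[OF x'] gH[OF y'] by simp
  qed
  have part2: "(\<lambda>\<omega>. meta_g {1..n} u f (\<lambda>j\<in>u. P j \<omega>)) \<in> borel_measurable (M \<theta>) \<and>
       (\<forall>\<alpha>\<in>{0..1}. measure (M \<theta>) {\<omega>\<in>space (M \<theta>). meta_g {1..n} u f (\<lambda>j\<in>u. P j \<omega>) \<le> \<alpha>} \<le> \<alpha>)"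
    if th: "\<theta> \<in> \<Theta>" and null: "\<forall>j\<in>u. \<theta> j \<in> \<Theta>0 j" for \<theta>
  proof -
    interpret prob_space "M \<theta>" using prob th by auto
    have Pu_meas[measurable]: "(\<lambda>\<omega>. \<lambda>j\<in>u. P j \<omega>) \<in> measurable (M \<theta>) (PiM u (\<lambda>_. borel))"
      by (rule measurable_restrict) (use P_meas th uI in auto)
    have Prng: "\<forall>i\<in>u. (\<lambda>j\<in>u. P j \<omega>) i \<in> {0..1}" if "\<omega> \<in> space (M \<theta>)" for \<omega>
      using P_range th uI that by auto
    have HPm[measurable]: "(\<lambda>\<omega>. H k (\<lambda>j\<in>u. P j \<omega>)) \<in> borel_measurable (M \<theta>)" for k
      by (rule measurable_compose[OF Pu_meas HM])
    have gm: "(\<lambda>\<omega>. meta_g {1..n} u f (\<lambda>j\<in>u. P j \<omega>)) \<in> borel_measurable (M \<theta>)"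
    proof (rule measurable_cong[THEN iffD2])
      show "\<And>\<omega>. \<omega> \<in> space (M \<theta>) \<Longrightarrow> meta_g {1..n} u f (\<lambda>j\<in>u. P j \<omega>) = (INF k. H k (\<lambda>j\<in>u. P j \<omega>))"
        using gH Prng by blast
      show "(\<lambda>\<omega>. INF k. H k (\<lambda>j\<in>u. P j \<omega>)) \<in> borel_measurable (M \<theta>)"
        by (rule borel_measurable_cINF_real) auto
    qed
    have valid: "measure (M \<theta>) {\<omega>\<in>space (M \<theta>). meta_g {1..n} u f (\<lambda>j\<in>u. P j \<omega>) \<le> \<alpha>} \<le> \<alpha>"
      if a01: "\<alpha> \<in> {0..1}" for \<alpha>
    proof -
      define G where "G = {\<omega>\<in>space (M \<theta>). meta_g {1..n} u f (\<lambda>j\<in>u. P j \<omega>) \<le> \<alpha>}"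
      have Gs: "G \<in> sets (M \<theta>)" unfolding G_def using gm by measurable
      have key: "measure (M \<theta>) G \<le> \<alpha>' + (real n + 1) * \<epsilon>"
        if aa: "\<alpha> < \<alpha>'" "\<alpha>' \<le> 1" and e: "\<epsilon> > 0" for \<alpha>' \<epsilon>
      proof -
        define Pu where "Pu \<omega> = (\<lambda>j\<in>u. P j \<omega>)" for \<omega>
        define A where "A k = {\<omega>\<in>space (M \<theta>). H k (Pu \<omega>) < \<alpha>'}" for k
        have As: "A k \<in> sets (M \<theta>)" for k unfolding A_def Pu_def by measurable
        have inc: "incseq A"
        proof (rule incseq_SucI)
          fix k show "A k \<subseteq> A (Suc k)"
          proof
            fix \<omega> assume "\<omega> \<in> A k"
            then have ws: "\<omega> \<in> space (M \<theta>)" and lt: "H k (Pu \<omega>) < \<alpha>'" unfolding A_def by auto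
            have "H (Suc k) (Pu \<omega>) \<le> H k (Pu \<omega>)" unfolding Pu_def by (rule Hanti[OF Prng[OF ws]])
            then show "\<omega> \<in> A (Suc k)" using ws lt unfolding A_def by auto
          qed
        qed
        have GA: "G \<subseteq> (\<Union>k. A k)"
        proof
          fix \<omega> assume w: "\<omega> \<in> G"
          then have ws: "\<omega> \<in> space (M \<theta>)" unfolding G_def by auto
          have "(INF k. H k (Pu \<omega>)) < \<alpha>'"
          proof -
            have "meta_g {1..n} u f (\<lambda>j\<in>u. P j \<omega>) \<le> \<alpha>" using w unfolding G_def by blast
            then show ?thesis using gH[OF Prng[OF ws]] aa unfolding Pu_def by linarith
          qed
          then obtain y where "y \<in> range (\<lambda>k. H k (Pu \<omega>))" "y < \<alpha>'"
            using cInf_lessD[of "range (\<lambda>k. H k (Pu \<omega>))" \<alpha>'] by auto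
          then show "\<omega> \<in> (\<Union>k. A k)" using ws unfolding A_def by auto
        qed
        have lim: "(\<lambda>k. measure (M \<theta>) (A k)) \<longlonglongrightarrow> measure (M \<theta>) (\<Union>k. A k)"
          by (rule finite_Lim_measure_incseq) (use As inc in auto)
        obtain k where k: "measure (M \<theta>) (\<Union>k. A k) - \<epsilon> < measure (M \<theta>) (A k)"
          using order_tendstoD(1)[OF lim, of "measure (M \<theta>) (\<Union>k. A k) - \<epsilon>"] e
          by (auto simp: eventually_sequentially)
        have UAs: "(\<Union>k. A k) \<in> sets (M \<theta>)" using As by auto
        have m1: "measure (M \<theta>) G \<le> measure (M \<theta>) (\<Union>k. A k)"
          by (rule finite_measure_mono[OF GA UAs])
        define \<delta> where "\<delta> = 1 / real (Suc k)"
        have d0: "\<delta> > 0" unfolding \<delta>_def by simp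
        have exT: "\<forall>j\<in>{1..n}-u. \<exists>\<theta>'. \<theta>' \<in> \<Theta> \<and> \<theta>' j \<in> \<Theta>1 j \<and> measure (M \<theta>') {\<omega>\<in>space (M \<theta>'). P j \<omega> \<le> \<delta>} > 1 - \<epsilon>"
          using strong_alt d0 e by blast
        obtain T where T: "\<forall>j\<in>{1..n}-u. T j \<in> \<Theta> \<and> T j j \<in> \<Theta>1 j \<and> measure (M (T j)) {\<omega>\<in>space (M (T j)). P j \<omega> \<le> \<delta>} > 1 - \<epsilon>"
          using bchoice[OF exT] by blast
        define \<theta>2 where "\<theta>2 = (\<lambda>i\<in>{1..n}. if i\<in>u then \<theta> i else T i i)"
        have th2: "\<theta>2 \<in> \<Theta>"
          using th T unfolding \<Theta>_def \<theta>2_def by (auto simp: PiE_iff)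
        have "{i\<in>{1..n}. \<theta>2 i \<in> \<Theta>1 i} \<subseteq> {1..n} - u"
          using null disj uI unfolding \<theta>2_def by auto
        then have "card {i\<in>{1..n}. \<theta>2 i \<in> \<Theta>1 i} \<le> r - 1"
          using card_mono[of "{1..n} - u"] cdiff by force
        then have fval: "measure (M \<theta>2) {\<omega>\<in>space (M \<theta>2). f (\<lambda>i\<in>{1..n}. P i \<omega>) \<le> \<alpha>'} \<le> \<alpha>'"
          using f_valid th2 aa a01 by auto
        interpret N: prob_space "M \<theta>2" using prob th2 by auto
        define C where "C = {\<omega>\<in>space (M \<theta>2). H k (Pu \<omega>) < \<alpha>'}"
        define E where "E = {\<omega>\<in>space (M \<theta>2). f (\<lambda>i\<in>{1..n}. P i \<omega>) \<le> \<alpha>'}"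
        define Bc where "Bc j = {\<omega>\<in>space (M \<theta>2). \<delta> < P j \<omega>}" for j
        have Pm2: "\<forall>j\<in>{1..n}. P j \<in> borel_measurable (M \<theta>2)" using P_meas th2 by auto
        have Pm1: "\<forall>j\<in>{1..n}. P j \<in> borel_measurable (M \<theta>)" using P_meas th by auto
        have Pr2: "\<forall>i\<in>{1..n}. P i \<omega> \<in> {0..1}" if "\<omega> \<in> space (M \<theta>2)" for \<omega>
          using P_range th2 that by auto
        have tr1: "measure (M \<theta>) (A k) = measure (M \<theta>2) C"
        proof -
          have agree: "\<forall>j\<in>u. \<theta> j = \<theta>2 j" unfolding \<theta>2_def using uI by auto
          have eq: "distr (M \<theta>) (PiM u (\<lambda>_. borel::real measure)) (\<lambda>\<omega>. \<lambda>j\<in>u. P j \<omega>) = distr (M \<theta>2) (PiM u (\<lambda>_. borel::real measure)) (\<lambda>\<omega>. \<lambda>j\<in>u. P j \<omega>)"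
            using marginal uI th th2 agree by blast
          have S: "{x\<in>space (PiM u (\<lambda>_. borel::real measure)). H k x < \<alpha>'} \<in> sets (PiM u (\<lambda>_. borel::real measure))" by measurable
          have "measure (M \<theta>) {\<omega>\<in>space (M \<theta>). (\<lambda>j\<in>u. P j \<omega>) \<in> {x\<in>space (PiM u (\<lambda>_. borel::real measure)). H k x < \<alpha>'}}
              = measure (M \<theta>2) {\<omega>\<in>space (M \<theta>2). (\<lambda>j\<in>u. P j \<omega>) \<in> {x\<in>space (PiM u (\<lambda>_. borel::real measure)). H k x < \<alpha>'}}"
            by (rule transfer_measure[OF eq _ _ S]) (use Pm1 Pm2 uI in auto)
          then show ?thesis unfolding A_def C_def Pu_def by (simp add: space_PiM)
        qed
        have tr2: "measure (M \<theta>2) {\<omega>\<in>space (M \<theta>2). P j \<omega> \<le> \<delta>} = measure (M (T j)) {\<omega>\<in>space (M (T j)). P j \<omega> \<le> \<delta>}"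
          if j: "j \<in> {1..n} - u" for j
        proof -
          have Tj: "T j \<in> \<Theta>" using T j by auto
          have agree: "\<forall>i\<in>{j}. \<theta>2 i = T j i" unfolding \<theta>2_def using j by auto
          have eq: "distr (M \<theta>2) (PiM {j} (\<lambda>_. borel::real measure)) (\<lambda>\<omega>. \<lambda>i\<in>{j}. P i \<omega>) = distr (M (T j)) (PiM {j} (\<lambda>_. borel::real measure)) (\<lambda>\<omega>. \<lambda>i\<in>{j}. P i \<omega>)"
            using marginal j th2 Tj agree by blast
          have S: "{x\<in>space (PiM {j} (\<lambda>_. borel::real measure)). x j \<le> \<delta>} \<in> sets (PiM {j} (\<lambda>_. borel::real measure))" by measurable
          have "measure (M \<theta>2) {\<omega>\<in>space (M \<theta>2). (\<lambda>i\<in>{j}. P i \<omega>) \<in> {x\<in>space (PiM {j} (\<lambda>_. borel::real measure)). x j \<le> \<delta>}}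
              = measure (M (T j)) {\<omega>\<in>space (M (T j)). (\<lambda>i\<in>{j}. P i \<omega>) \<in> {x\<in>space (PiM {j} (\<lambda>_. borel::real measure)). x j \<le> \<delta>}}"
            by (rule transfer_measure[OF eq _ _ S]) (use Pm2 P_meas Tj j in auto)
          then show ?thesis by (simp add: space_PiM)
        qed
        have Bcs: "Bc j \<in> sets (M \<theta>2)" if "j \<in> {1..n}" for j
        proof -
          have [measurable]: "P j \<in> borel_measurable (M \<theta>2)" using Pm2 that by auto
          show ?thesis unfolding Bc_def by measurable
        qed
        have Bcm: "measure (M \<theta>2) (Bc j) < \<epsilon>" if j: "j \<in> {1..n} - u" for j
        proof -
          have [measurable]: "P j \<in> borel_measurable (M \<theta>2)" using Pm2 j by auto
          have Ls: "{\<omega>\<in>space (M \<theta>2). P j \<omega> \<le> \<delta>} \<in> sets (M \<theta>2)" by measurable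
          have "Bc j = space (M \<theta>2) - {\<omega>\<in>space (M \<theta>2). P j \<omega> \<le> \<delta>}" unfolding Bc_def by auto
          then have "measure (M \<theta>2) (Bc j) = 1 - measure (M \<theta>2) {\<omega>\<in>space (M \<theta>2). P j \<omega> \<le> \<delta>}"
            using N.prob_compl[OF Ls] by simp
          moreover have "1 - \<epsilon> < measure (M (T j)) {\<omega>\<in>space (M (T j)). P j \<omega> \<le> \<delta>}" using T j by blast
          ultimately show ?thesis using tr2[OF j] by linarith
        qed
        have Es: "E \<in> sets (M \<theta>2)"
        proof -
          have "(\<lambda>\<omega>. \<lambda>i\<in>{1..n}. P i \<omega>) \<in> measurable (M \<theta>2) (PiM {1..n} (\<lambda>_. borel))"
            by (rule measurable_restrict) (use Pm2 in auto)
          then have "(\<lambda>\<omega>. f (\<lambda>i\<in>{1..n}. P i \<omega>)) \<in> borel_measurable (M \<theta>2)"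
            by (rule measurable_compose[OF _ f_meas])
          then show ?thesis unfolding E_def by measurable
        qed
        have UBs: "(\<Union>j\<in>{1..n} - u. Bc j) \<in> sets (M \<theta>2)" using Bcs by auto
        have cover: "C \<subseteq> E \<union> (\<Union>j\<in>{1..n} - u. Bc j)"
        proof
          fix \<omega> assume w: "\<omega> \<in> C"
          then have ws: "\<omega> \<in> space (M \<theta>2)" and hk: "H k (Pu \<omega>) < \<alpha>'" unfolding C_def by auto
          show "\<omega> \<in> E \<union> (\<Union>j\<in>{1..n} - u. Bc j)"
          proof (cases "\<forall>j\<in>{1..n} - u. P j \<omega> \<le> \<delta>")
            case True
            have "f (\<lambda>i\<in>{1..n}. P i \<omega>) \<le> H k (Pu \<omega>)"
              unfolding H_def Pu_def
            proof (rule monoD'[OF f_mono])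
              show "(\<lambda>i\<in>{1..n}. P i \<omega>) \<in> PiE {1..n} (\<lambda>_. {0..1})" using Pr2[OF ws] by auto
              show "(\<lambda>i\<in>{1..n}. if i \<in> u then (\<lambda>j\<in>u. P j \<omega>) i else 1 / real (Suc k)) \<in> PiE {1..n} (\<lambda>_. {0..1})"
                by (rule combined_in) (use Pr2[OF ws] uI in auto)
              show "\<forall>i\<in>{1..n}. (\<lambda>i\<in>{1..n}. P i \<omega>) i \<le> (\<lambda>i\<in>{1..n}. if i \<in> u then (\<lambda>j\<in>u. P j \<omega>) i else 1 / real (Suc k)) i"
                using True unfolding \<delta>_def by auto
            qed
            then have "\<omega> \<in> E" unfolding E_def using ws hk by auto
            then show ?thesis by auto
          next
            case False
            then obtain j where "j \<in> {1..n} - u" "\<delta> < P j \<omega>" by (auto simp: not_le)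
            then show ?thesis unfolding Bc_def using ws by blast
          qed
        qed
        have "measure (M \<theta>2) C \<le> measure (M \<theta>2) (E \<union> (\<Union>j\<in>{1..n} - u. Bc j))"
          by (rule N.finite_measure_mono[OF cover]) (use Es UBs in auto)
        also have "\<dots> \<le> measure (M \<theta>2) E + measure (M \<theta>2) (\<Union>j\<in>{1..n} - u. Bc j)"
          by (rule measure_subadditive[OF Es UBs]) (simp_all add: N.emeasure_eq_measure)
        also have "measure (M \<theta>2) (\<Union>j\<in>{1..n} - u. Bc j) \<le> (\<Sum>j\<in>{1..n} - u. measure (M \<theta>2) (Bc j))"
          by (rule N.finite_measure_subadditive_finite) (use Bcs in auto)
        also have "\<dots> \<le> (\<Sum>j\<in>{1..n} - u. \<epsilon>)"
          by (rule sum_mono) (use Bcm in \<open>auto intro: less_imp_le\<close>)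
        also have "\<dots> = real (card ({1..n} - u)) * \<epsilon>" by simp
        also have "\<dots> \<le> real n * \<epsilon>"
          using e cdiff r by (intro mult_right_mono) auto
        finally have mC: "measure (M \<theta>2) C \<le> \<alpha>' + real n * \<epsilon>"
          using fval unfolding E_def by linarith
        show ?thesis using m1 k tr1 mC by (simp add: algebra_simps)
      qed
      show ?thesis
      proof (rule ccontr)
        assume "\<not> ?thesis"
        then have gt: "measure (M \<theta>) G > \<alpha>" unfolding G_def by simp
        define d where "d = measure (M \<theta>) G - \<alpha>"
        have d0: "d > 0" using gt d_def by simp
        have "measure (M \<theta>) G \<le> 1" by (rule prob_le_1)
        then have a1: "\<alpha> < 1" using gt by linarith
        define a' where "a' = min 1 (\<alpha> + d/2)"
        define e where "e = d / (4 * (real n + 1))"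
        have "a' > \<alpha>" "a' \<le> 1" using a1 d0 by (auto simp: a'_def)
        moreover have "e > 0" using d0 by (simp add: e_def)
        ultimately have "measure (M \<theta>) G \<le> a' + (real n + 1) * e" by (rule key)
        also have "(real n + 1) * e = d / 4" unfolding e_def by (simp add: field_simps)
        also have "a' \<le> \<alpha> + d/2" unfolding a'_def by simp
        finally show False using d_def d0 by linarith
      qed
    qed
    show ?thesis using gm valid by blast
  qed
  show ?thesis using part1 part2 by blast
qed

end
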